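(* Let $s\ge 1$, $L\ge 1$ and widths $d_0=s,d_1,\dots,d_{L+1}\ge 1$. Let $W_\ell\in\mathbb{R}^{d_{\ell+1}\times d_\ell}$ and $\mathbf{v}_\ell\in\mathbb{R}^{d_{\ell+1}}$ for $\ell=0,\dots,L$, and let $\sigma:\mathbb{R}\to\mathbb{R}$ be smooth (applied componentwise to vectors). Suppose there are positive sequences $(\beta_j)_{j\ge1}$, $(R_\ell)_{\ell\ge1}$, $(A_n)_{n\ge1}$ such that $\max_{1\le p\le d_1}|W_{0,p,j}|\le\beta_j$ for all $j=1,\dots,s$; $\|W_\ell\|_\infty:=\max_{1\le p\le d_{\ell+1}}\sum_{q=1}^{d_\ell}|W_{\ell,p,q}|\le R_\ell$ for all $\ell\ge1$; and $\sup_{x\in\mathbb{R}}|\sigma^{(n)}(x)|\le A_n$ for all $n\ge1$. Define numbers $\Gamma^{[\ell]}_n$ and $\mathbb{B}^{[\ell]}_{n,\lambda}$ recursively by $\Gamma^{[1]}_n:=A_n$ for $n\ge1$; $\Gamma^{[\ell]}_n:=\sum_{\lambda=1}^n A_\lambda R_{\ell-1}^\lambda\,\mathbb{B}^{[\ell-1]}_{n,\lambda}$ for $\ell\ge2$, $n\ge1$; $\mathbb{B}^{[\ell]}_{n,1}:=\Gamma^{[\ell]}_n$ for $n\ge1$; and $\mathbb{B}^{[\ell]}_{n,\lambda}:=\sum_{i=\lambda-1}^{n-1}\binom{n-1}{i}\Gamma^{[\ell]}_{n-i}\,\mathbb{B}^{[\ell]}_{i,\lambda-1}$ for $\ell\ge1$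 and $n\ge\lambda\ge2$. Then for every depth $\ell$ with $1\le \ell\le L$, every component $1\le p\le d_{\ell+1}$, every multiindex $\boldsymbol{\nu}\in\mathbb{N}_0^s$ with $\boldsymbol{\nu}\neq\mathbf{0}$, and every $\mathbf{y}$: (a) the non-periodic network defined by $G^{[0]}_\theta(\mathbf{y}):=W_0\mathbf{y}+\mathbf{v}_0$, $G^{[\ell]}_\theta(\mathbf{y}):=W_\ell\,\sigma(G^{[\ell-1]}_\theta(\mathbf{y}))+\mathbf{v}_\ell$ ($\ell\ge1$) satisfies $$|\partial^{\boldsymbol{\nu}}G^{[\ell]}_\theta(\mathbf{y})_p|\le R_\ell\,\boldsymbol{\beta}^{\boldsymbol{\nu}}\,\Gamma^{[\ell]}_{|\boldsymbol{\nu}|};$$ (b) the periodic network defined by $G^{[0]}_\theta(\mathbf{y}):=W_0\sin(2\pi\mathbf{y})+\mathbf{v}_0$ (sine applied componentwise), $G^{[\ell]}_\theta(\mathbf{y}):=W_\ell\,\sigma(G^{[\ell-1]}_\theta(\mathbf{y}))+\mathbf{v}_\ell$ ($\ell\ge1$) satisfies $$|\partial^{\boldsymbol{\nu}}G^{[\ell]}_\theta(\mathbf{y})_p|\le R_\ell\,(2\pi)^{|\boldsymbol{\nu}|}\sum_{\mathbf{m}\le\boldsymbol{\nu}}\boldsymbol{\beta}^{\mathbf{m}}\,\Gamma^{[\ell]}_{|\mathbf{m}|}\,\mathcal{S}(\boldsymbol{\nu},\mathbf{m}),$$ where the term $\mathbf{m}=\mathbf{0}$ vanishes because $\mathcal{S}(\boldsymbol{\nu},\mathbf{0})=0$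 for $\boldsymbol{\nu}\ne\mathbf{0}$.
   Context: For $\boldsymbol{\nu}=(\nu_1,\dots,\nu_s)\in\mathbb{N}_0^s$: $|\boldsymbol{\nu}|=\sum_j\nu_j$, $\partial^{\boldsymbol{\nu}}=\prod_j(\partial/\partial y_j)^{\nu_j}$, $\boldsymbol{\beta}^{\boldsymbol{\nu}}=\prod_j\beta_j^{\nu_j}$, and $\mathbf{m}\le\boldsymbol{\nu}$ means $m_j\le\nu_j$ for all $j$. $\mathcal{S}(n,k)$ denotes the Stirling number of the second kind: $\mathcal{S}(n,0)=\delta_{n,0}$, $\mathcal{S}(n,k)=0$ for $k>n$, and $\mathcal{S}(n,k)=\frac1{k!}\sum_{i=0}^k(-1)^{k-i}\binom{k}{i}i^n$ for $n\ge k$; $\mathcal{S}(\boldsymbol{\nu},\mathbf{m}):=\prod_j\mathcal{S}(\nu_j,m_j)$. $G^{[\ell]}_\theta(\mathbf{y})_p$ denotes the $p$-th component. *)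

theory Defs
  imports "HOL-Analysis.Analysis" "HOL-Combinatorics.Stirling"
begin

text \<open>Vectors in R^s are functions nat => real (components 0..s-1 used).
  Weight matrices: W l p q = entry (p,q) of W_l (0-based rows/columns);
  biases: v l p. Widths: d l (with d 0 = s).\<close>

definition dpart :: "nat \<Rightarrow> ((nat \<Rightarrow> real) \<Rightarrow> real) \<Rightarrow> ((nat \<Rightarrow> real) \<Rightarrow> real)" where
  "dpart j f = (\<lambda>y. deriv (\<lambda>t. f (y(j := t))) (y j))"

definition mpartial :: "nat \<Rightarrow> (nat \<Rightarrow> nat) \<Rightarrow> ((nat \<Rightarrow> real) \<Rightarrow> real) \<Rightarrow> ((nat \<Rightarrow> real) \<Rightarrow> real)" where
  "mpartial s nu f = foldr (\<lambda>j g. (dpart j ^^ nu j) g) [0..<s] f"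

primrec net :: "(nat \<Rightarrow> nat) \<Rightarrow> (nat \<Rightarrow> nat \<Rightarrow> nat \<Rightarrow> real) \<Rightarrow> (nat \<Rightarrow> nat \<Rightarrow> real)
    \<Rightarrow> (real \<Rightarrow> real) \<Rightarrow> (nat \<Rightarrow> real) \<Rightarrow> nat \<Rightarrow> (nat \<Rightarrow> real)" where
  "net d W v \<sigma> x 0 = (\<lambda>p. (\<Sum>j<d 0. W 0 p j * x j) + v 0 p)"
| "net d W v \<sigma> x (Suc l) =
     (\<lambda>p. (\<Sum>q<d (Suc l). W (Suc l) p q * \<sigma> (net d W v \<sigma> x l q)) + v (Suc l) p)"

definition netNP where "netNP d W v \<sigma> l y = net d W v \<sigma> y l"
definition netP where "netP d W v \<sigma> l y = net d W v \<sigma> (\<lambda>j. sin (2 * pi * y j)) l"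

fun Bseq :: "(nat \<Rightarrow> real) \<Rightarrow> nat \<Rightarrow> nat \<Rightarrow> real" where
  "Bseq g n 0 = 0"
| "Bseq g n (Suc 0) = g n"
| "Bseq g n (Suc (Suc k)) =
     (\<Sum>i = Suc k..n - 1. real (n - 1 choose i) * g (n - i) * Bseq g i (Suc k))"

text \<open>Gamma l n = Gamma^[l]_n for l >= 1, n >= 1 (value 0 at n = 0 or l = 0 is a dummy).\<close>
primrec Gamma :: "(nat \<Rightarrow> real) \<Rightarrow> (nat \<Rightarrow> real) \<Rightarrow> nat \<Rightarrow> nat \<Rightarrow> real" where
  "Gamma A R 0 = (\<lambda>n. 0)"
| "Gamma A R (Suc l) =
     (if l = 0 then (\<lambda>n. if n = 0 then 0 else A n)
      else (\<lambda>n. \<Sum>k=1..n. A k * R l ^ k * Bseq (Gamma A R l) n k))"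

definition BB where "BB A R l n k = Bseq (Gamma A R l) n k"

end

theory Submission
  imports Defs
begin


definition pd :: "nat \<Rightarrow> ((nat \<Rightarrow> real) \<Rightarrow> real) \<Rightarrow> (nat \<Rightarrow> real) \<Rightarrow> bool" where
  "pd j f y = ((\<lambda>t. f (y(j := t))) differentiable (at (y j)))"

lemma pdD: "pd j f y \<Longrightarrow> ((\<lambda>t. f (y(j := t))) has_real_derivative dpart j f y) (at (y j))"
  unfolding pd_def dpart_def using DERIV_deriv_iff_real_differentiable by blast

lemma pdI: assumes "((\<lambda>t. f (y(j := t))) has_real_derivative D) (at (y j))"
  shows "pd j f y" "dpart j f y = D"
proof -
  have "deriv (\<lambda>t. f (y(j := t))) (y j) = D" using DERIV_imp_deriv[OF assms] .
  then show "dpart j f y = D" unfolding dpart_def by simp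
  show "pd j f y" unfolding pd_def using assms DERIV_deriv_iff_real_differentiable DERIV_imp_deriv
    by metis
qed

lemma pdD_at: "pd j f (y(j := t0)) \<Longrightarrow> ((\<lambda>t. f (y(j := t))) has_real_derivative dpart j f (y(j:=t0))) (at t0)"
  using pdD[of j f "y(j:=t0)"] by simp

primrec sm :: "nat \<Rightarrow> ((nat \<Rightarrow> real) \<Rightarrow> real) \<Rightarrow> bool" where
  "sm 0 f = (\<forall>j y. pd j f y)"
| "sm (Suc n) f = ((\<forall>j y. pd j f y) \<and> (\<forall>j. sm n (dpart j f)))"

definition smooth where "smooth f = (\<forall>n. sm n f)"

lemma sm_pd: "sm n f \<Longrightarrow> pd j f y" by (cases n) auto

lemma sm_Suc_mono: "sm (Suc n) f \<Longrightarrow> sm n f"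
  by (induct n arbitrary: f) auto

lemma smooth_pd: "smooth f \<Longrightarrow> pd j f y" unfolding smooth_def using sm_pd by blast

lemma smooth_dpart: "smooth f \<Longrightarrow> smooth (dpart j f)"
  unfolding smooth_def by (metis sm.simps(2))

lemma smoothI: assumes "\<And>j y. pd j f y" "\<And>j. smooth (dpart j f)" shows "smooth f"
  unfolding smooth_def
proof
  fix n show "sm n f" using assms by (cases n) (auto simp: smooth_def)
qed

lemma dpart_add:
  assumes "pd j f y" "pd j g y"
  shows "pd j (\<lambda>y. f y + g y) y" "dpart j (\<lambda>y. f y + g y) y = dpart j f y + dpart j g y"
  using pdI[OF DERIV_add[OF pdD[OF assms(1)] pdD[OF assms(2)]]] by auto

lemma dpart_mult:
  assumes "pd j f y" "pd j g y"
  shows "pd j (\<lambda>y. f y * g y) y" "dpart j (\<lambda>y. f y * g y) y = dpart j f y * g y + f y * dpart j g y"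
  using pdI[OF DERIV_mult[OF pdD[OF assms(1)] pdD[OF assms(2)]]] by auto

lemma dpart_const:
  shows "pd j (\<lambda>y. c) y" "dpart j (\<lambda>y. c) y = 0"
  using pdI[of "\<lambda>y. c" y j 0] by auto

lemma dpart_coord:
  shows "pd j (\<lambda>y. y i) y" "dpart j (\<lambda>y. y i) y = (if i = j then 1 else 0)"
proof -
  have "((\<lambda>t. (y(j := t)) i) has_real_derivative (if i = j then 1 else 0)) (at (y j))"
    by (cases "i = j") (auto intro!: derivative_eq_intros)
  from pdI[of "\<lambda>y. y i" y j, OF this]
  show "pd j (\<lambda>y. y i) y" "dpart j (\<lambda>y. y i) y = (if i = j then 1 else 0)" by auto
qed

lemma dpart_comp:
  assumes "\<phi> differentiable (at (g y))" "pd j g y"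
  shows "pd j (\<lambda>y. \<phi> (g y)) y" "dpart j (\<lambda>y. \<phi> (g y)) y = deriv \<phi> (g y) * dpart j g y"
proof -
  have d1: "(\<phi> has_real_derivative deriv \<phi> (g y)) (at (g (y(j := y j))))"
    using assms(1) DERIV_deriv_iff_real_differentiable by simp
  have "((\<lambda>t. \<phi> (g (y(j := t)))) has_real_derivative deriv \<phi> (g y) * dpart j g y) (at (y j))"
    using DERIV_chain2[OF d1 pdD[OF assms(2)]] .
  from pdI[of "\<lambda>y. \<phi> (g y)" y j, OF this]
  show "pd j (\<lambda>y. \<phi> (g y)) y" "dpart j (\<lambda>y. \<phi> (g y)) y = deriv \<phi> (g y) * dpart j g y" by auto
qed

lemma sm_add: "sm n f \<Longrightarrow> sm n g \<Longrightarrow> sm n (\<lambda>y. f y + g y)"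
proof (induct n arbitrary: f g)
  case 0 then show ?case using dpart_add by auto
next
  case (Suc n)
  have pf: "\<And>j y. pd j f y" and pg: "\<And>j y. pd j g y" using Suc.prems sm_pd by blast+
  have e: "dpart j (\<lambda>y. f y + g y) = (\<lambda>y. dpart j f y + dpart j g y)" for j
    using dpart_add(2)[OF pf pg] by auto
  show ?case using Suc pf pg dpart_add(1) by (auto simp: e)
qed

lemma sm_const: "sm n (\<lambda>y. c)"
proof (induct n arbitrary: c)
  case 0 then show ?case using dpart_const by auto
next
  case (Suc n)
  have e: "dpart j (\<lambda>y. c) = (\<lambda>y. 0)" for j using dpart_const(2) by auto
  show ?case using Suc dpart_const(1) by (auto simp: e)
qed

lemma sm_mult: "sm n f \<Longrightarrow> sm n g \<Longrightarrow> sm n (\<lambda>y. f y * g y)"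
proof (induct n arbitrary: f g)
  case 0 then show ?case using dpart_mult by auto
next
  case (Suc n)
  have pf: "\<And>j y. pd j f y" and pg: "\<And>j y. pd j g y" using Suc.prems sm_pd by blast+
  have e: "dpart j (\<lambda>y. f y * g y) = (\<lambda>y. dpart j f y * g y + f y * dpart j g y)" for j
    using dpart_mult(2)[OF pf pg] by auto
  have "sm n (\<lambda>y. dpart j f y * g y + f y * dpart j g y)" for j
    using Suc sm_Suc_mono by (intro sm_add) auto
  then show ?case using pf pg dpart_mult(1) by (auto simp: e)
qed

lemma sm_coord: "sm n (\<lambda>y. y i)"
proof (cases n)
  case 0 then show ?thesis using dpart_coord by auto
next
  case (Suc m)
  have e: "dpart j (\<lambda>y. y i) = (\<lambda>y. if i = j then 1 else 0)" for j using dpart_coord(2) by auto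
  show ?thesis using Suc dpart_coord(1) sm_const by (auto simp: e)
qed

lemma sm_comp:
  assumes \<phi>: "\<forall>k x. (deriv ^^ k) \<phi> differentiable (at x)"
  shows "sm n g \<Longrightarrow> sm n (\<lambda>y. (deriv ^^ k) \<phi> (g y))"
proof (induct n arbitrary: g k)
  case 0 then show ?case using dpart_comp \<phi> by auto
next
  case (Suc n)
  have pg: "\<And>j y. pd j g y" using Suc.prems sm_pd by blast+
  have e: "dpart j (\<lambda>y. (deriv ^^ k) \<phi> (g y)) = (\<lambda>y. (deriv ^^ Suc k) \<phi> (g y) * dpart j g y)" for j
    using dpart_comp(2)[OF _ pg] \<phi> by auto
  have s1: "sm n (\<lambda>y. (deriv ^^ Suc k) \<phi> (g y))"
    using Suc.hyps[of g "Suc k"] sm_Suc_mono Suc.prems by blast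
  have "sm n (\<lambda>y. (deriv ^^ Suc k) \<phi> (g y) * dpart j g y)" for j
    using Suc.prems s1 by (intro sm_mult) auto
  then show ?case using pg dpart_comp(1) \<phi> by (simp only: e sm.simps) blast
qed

lemma smooth_add: "smooth f \<Longrightarrow> smooth g \<Longrightarrow> smooth (\<lambda>y. f y + g y)"
  unfolding smooth_def using sm_add by blast
lemma smooth_mult: "smooth f \<Longrightarrow> smooth g \<Longrightarrow> smooth (\<lambda>y. f y * g y)"
  unfolding smooth_def using sm_mult by blast
lemma smooth_const: "smooth (\<lambda>y. c)"
  unfolding smooth_def using sm_const by blast
lemma smooth_coord: "smooth (\<lambda>y. y i)"
  unfolding smooth_def using sm_coord by blast
lemma smooth_comp: "\<forall>k x. (deriv ^^ k) \<phi> differentiable (at x) \<Longrightarrow> smooth g \<Longrightarrow> smooth (\<lambda>y. (deriv ^^ k) \<phi> (g y))"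
  unfolding smooth_def using sm_comp by blast
lemma smooth_sum: "finite Q \<Longrightarrow> (\<And>q. q \<in> Q \<Longrightarrow> smooth (f q)) \<Longrightarrow> smooth (\<lambda>y. \<Sum>q\<in>Q. f q y)"
  by (induct Q rule: finite_induct) (auto intro: smooth_add smooth_const)

(* iterated partials, innermost first *)
definition dl :: "nat list \<Rightarrow> ((nat \<Rightarrow> real) \<Rightarrow> real) \<Rightarrow> ((nat \<Rightarrow> real) \<Rightarrow> real)" where
  "dl js f = fold dpart js f"

lemma dl_Nil[simp]: "dl [] f = f" and dl_Cons[simp]: "dl (j # js) f = dl js (dpart j f)"
  by (simp_all add: dl_def)

lemma smooth_dl: "smooth f \<Longrightarrow> smooth (dl js f)"
  by (induct js arbitrary: f) (auto intro: smooth_dpart)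

lemma dl_add: "smooth f \<Longrightarrow> smooth g \<Longrightarrow> dl js (\<lambda>y. f y + g y) = (\<lambda>y. dl js f y + dl js g y)"
proof (induct js arbitrary: f g)
  case Nil then show ?case by simp
next
  case (Cons j js)
  have e: "dpart j (\<lambda>y. f y + g y) = (\<lambda>y. dpart j f y + dpart j g y)"
    using dpart_add(2) smooth_pd Cons.prems by blast
  show ?case using Cons by (simp add: e smooth_dpart)
qed

lemma dl_const: "dl js (\<lambda>y. c) = (\<lambda>y. if js = [] then c else 0)"
proof (induct js arbitrary: c)
  case Nil then show ?case by simp
next
  case (Cons j js)
  have e: "dpart j (\<lambda>y. c) = (\<lambda>y. 0)" using dpart_const(2) by blast
  show ?case using Cons by (simp add: e)
qed

lemma dl_cmult: "smooth f \<Longrightarrow> dl js (\<lambda>y. c * f y) = (\<lambda>y. c * dl js f y)"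
proof (induct js arbitrary: f)
  case Nil then show ?case by simp
next
  case (Cons j js)
  have e: "dpart j (\<lambda>y. c * f y) = (\<lambda>y. c * dpart j f y)"
    using dpart_mult(2)[OF dpart_const(1) smooth_pd[OF Cons.prems]] dpart_const(2) by auto
  show ?case using Cons by (simp add: e smooth_dpart)
qed

lemma dl_sum: "finite Q \<Longrightarrow> (\<And>q. q \<in> Q \<Longrightarrow> smooth (f q)) \<Longrightarrow>
   dl js (\<lambda>y. \<Sum>q\<in>Q. f q y) = (\<lambda>y. \<Sum>q\<in>Q. dl js (f q) y)"
proof (induct Q rule: finite_induct)
  case empty then show ?case using dl_const[of js 0] by auto
next
  case (insert x F)
  have "dl js (\<lambda>y. \<Sum>q\<in>insert x F. f q y) = dl js (\<lambda>y. f x y + (\<Sum>q\<in>F. f q y))"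
    using insert by simp
  also have "\<dots> = (\<lambda>y. dl js (f x) y + dl js (\<lambda>y. \<Sum>q\<in>F. f q y) y)"
    using insert by (intro dl_add smooth_sum) auto
  finally show ?case using insert by simp
qed



definition bp :: "(nat \<Rightarrow> real) \<Rightarrow> nat list \<Rightarrow> real" where
  "bp \<beta> js = prod_list (map \<beta> js)"

lemma bp_Nil[simp]: "bp \<beta> [] = 1" and bp_Cons[simp]: "bp \<beta> (j # js) = \<beta> j * bp \<beta> js"
  by (simp_all add: bp_def)

lemma pascal_conv:
  fixes F G :: "nat \<Rightarrow> real"
  shows "(\<Sum>i\<le>Suc n. real (Suc n choose i) * F i * G (Suc n - i)) =
    (\<Sum>i\<le>n. real (n choose i) * F (Suc i) * G (n - i)) + (\<Sum>i\<le>n. real (n choose i) * F i * G (Suc n - i))"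
proof -
  have h1: "(\<Sum>i\<le>Suc n. real (Suc n choose i) * F i * G (Suc n - i)) =
     F 0 * G (Suc n) + (\<Sum>i\<le>n. real (Suc n choose Suc i) * F (Suc i) * G (n - i))"
    by (subst sum.atMost_Suc_shift) simp
  have h2: "(\<Sum>i\<le>n. real (Suc n choose Suc i) * F (Suc i) * G (n - i)) = (\<Sum>i\<le>n. real (n choose i) * F (Suc i) * G (n - i))
       + (\<Sum>i\<le>n. real (n choose Suc i) * F (Suc i) * G (n - i))"
    by (simp add: sum.distrib algebra_simps)
  have h3: "F 0 * G (Suc n) + (\<Sum>i\<le>n. real (n choose Suc i) * F (Suc i) * G (n - i))
      = (\<Sum>i\<le>Suc n. real (n choose i) * F i * G (Suc n - i))"
    by (subst sum.atMost_Suc_shift) simp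
  have h4: "(\<Sum>i\<le>Suc n. real (n choose i) * F i * G (Suc n - i)) = (\<Sum>i\<le>n. real (n choose i) * F i * G (Suc n - i))"
    by simp
  show ?thesis using h1 h2 h3 h4 by simp
qed

lemma prod_bound:
  assumes "smooth f" "smooth g"
    and fb: "\<forall>ks y. set ks \<subseteq> {..<s} \<and> length ks \<le> N \<longrightarrow> \<bar>dl ks f y\<bar> \<le> bp \<beta> ks * F (length ks)"
    and gb: "\<forall>ks y. set ks \<subseteq> {..<s} \<and> length ks \<le> N \<longrightarrow> \<bar>dl ks g y\<bar> \<le> bp \<beta> ks * G (length ks)"
    and "set ks \<subseteq> {..<s}" "length ks \<le> N"
  shows "\<bar>dl ks (\<lambda>y. f y * g y) y\<bar> \<le> bp \<beta> ks * (\<Sum>i\<le>length ks. real (length ks choose i) * F i * G (length ks - i))"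
  using assms
proof (induct ks arbitrary: f g F G N y)
  case Nil
  have "\<bar>f y * g y\<bar> \<le> F 0 * G 0"
    using Nil.prems(3)[rule_format, of "[]" y] Nil.prems(4)[rule_format, of "[]" y]
    unfolding abs_mult by (intro mult_mono) auto
  then show ?case by simp
next
  case (Cons j ks)
  obtain N' where N: "N = Suc N'" using Cons.prems(6) by (cases N) auto
  have j: "j < s" using Cons.prems(5) by auto
  have pf: "\<And>y. pd j f y" and pg: "\<And>y. pd j g y" using Cons.prems smooth_pd by blast+
  have e: "dpart j (\<lambda>y. f y * g y) = (\<lambda>y. dpart j f y * g y + f y * dpart j g y)"
    using dpart_mult(2)[OF pf pg] by auto
  have sf': "smooth (dpart j f)" and sg': "smooth (dpart j g)" using Cons.prems smooth_dpart by blast+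
  have dl_e: "dl (j # ks) (\<lambda>y. f y * g y) = (\<lambda>y. dl ks (\<lambda>y. dpart j f y * g y) y + dl ks (\<lambda>y. f y * dpart j g y) y)"
    using Cons.prems sf' sg' by (simp add: e dl_add smooth_mult)
  let ?n = "length ks"
  have fb': "\<forall>ks' y. set ks' \<subseteq> {..<s} \<and> length ks' \<le> N' \<longrightarrow> \<bar>dl ks' (dpart j f) y\<bar> \<le> bp \<beta> ks' * (\<beta> j * F (Suc (length ks')))"
  proof (intro allI impI)
    fix ks' y assume "set ks' \<subseteq> {..<s} \<and> length ks' \<le> N'"
    then have "\<bar>dl (j # ks') f y\<bar> \<le> bp \<beta> (j # ks') * F (length (j # ks'))"
      using Cons.prems(3) j N by (intro Cons.prems(3)[rule_format]) auto
    then show "\<bar>dl ks' (dpart j f) y\<bar> \<le> bp \<beta> ks' * (\<beta> j * F (Suc (length ks')))" by (simp add: algebra_simps)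
  qed
  have gb': "\<forall>ks' y. set ks' \<subseteq> {..<s} \<and> length ks' \<le> N' \<longrightarrow> \<bar>dl ks' (dpart j g) y\<bar> \<le> bp \<beta> ks' * (\<beta> j * G (Suc (length ks')))"
  proof (intro allI impI)
    fix ks' y assume "set ks' \<subseteq> {..<s} \<and> length ks' \<le> N'"
    then have "\<bar>dl (j # ks') g y\<bar> \<le> bp \<beta> (j # ks') * G (length (j # ks'))"
      using j N by (intro Cons.prems(4)[rule_format]) auto
    then show "\<bar>dl ks' (dpart j g) y\<bar> \<le> bp \<beta> ks' * (\<beta> j * G (Suc (length ks')))" by (simp add: algebra_simps)
  qed
  have fbN: "\<forall>ks y. set ks \<subseteq> {..<s} \<and> length ks \<le> N' \<longrightarrow> \<bar>dl ks f y\<bar> \<le> bp \<beta> ks * F (length ks)"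
    using Cons.prems(3) N by auto
  have gbN: "\<forall>ks y. set ks \<subseteq> {..<s} \<and> length ks \<le> N' \<longrightarrow> \<bar>dl ks g y\<bar> \<le> bp \<beta> ks * G (length ks)"
    using Cons.prems(4) N by auto
  have ks: "set ks \<subseteq> {..<s}" "length ks \<le> N'" using Cons.prems N by auto
  have b1: "\<bar>dl ks (\<lambda>y. dpart j f y * g y) y\<bar> \<le> bp \<beta> ks * (\<Sum>i\<le>?n. real (?n choose i) * (\<beta> j * F (Suc i)) * G (?n - i))"
    using Cons.hyps[OF sf' Cons.prems(2) fb' gbN ks] .
  have b2: "\<bar>dl ks (\<lambda>y. f y * dpart j g y) y\<bar> \<le> bp \<beta> ks * (\<Sum>i\<le>?n. real (?n choose i) * F i * (\<beta> j * G (Suc (?n - i))))"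
    using Cons.hyps[OF Cons.prems(1) sg' fbN gb' ks] .
  have "\<bar>dl (j # ks) (\<lambda>y. f y * g y) y\<bar> \<le> \<bar>dl ks (\<lambda>y. dpart j f y * g y) y\<bar> + \<bar>dl ks (\<lambda>y. f y * dpart j g y) y\<bar>"
    unfolding dl_e by (rule abs_triangle_ineq)
  also have "\<dots> \<le> bp \<beta> ks * (\<Sum>i\<le>?n. real (?n choose i) * (\<beta> j * F (Suc i)) * G (?n - i))
     + bp \<beta> ks * (\<Sum>i\<le>?n. real (?n choose i) * F i * (\<beta> j * G (Suc (?n - i))))"
    using b1 b2 by linarith
  also have "\<dots> = bp \<beta> (j # ks) * ((\<Sum>i\<le>?n. real (?n choose i) * F (Suc i) * G (?n - i))
     + (\<Sum>i\<le>?n. real (?n choose i) * F i * G (Suc ?n - i)))"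
    by (simp add: sum_distrib_left sum_distrib_right algebra_simps Suc_diff_le sum.distrib)
  also have "\<dots> = bp \<beta> (j # ks) * (\<Sum>i\<le>length (j # ks). real (length (j # ks) choose i) * F i * G (length (j # ks) - i))"
    by (simp only: pascal_conv length_Cons)
  finally show ?case .
qed



lemma Bseq_Suc: "1 \<le> k \<Longrightarrow> Bseq c (Suc n) (Suc k) = (\<Sum>i=k..n. real (n choose i) * c (Suc n - i) * Bseq c i k)"
  by (cases k) auto

lemma Bseq_vanish: "i < k \<Longrightarrow> 2 \<le> k \<Longrightarrow> Bseq c i k = 0"
proof -
  assume "i < k" "2 \<le> k"
  then obtain k' where k: "k = Suc (Suc k')" by (metis add_2_eq_Suc le_Suc_ex)
  then show ?thesis using \<open>i < k\<close> by auto
qed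

definition E :: "(nat \<Rightarrow> real) \<Rightarrow> (nat \<Rightarrow> real) \<Rightarrow> nat \<Rightarrow> nat \<Rightarrow> real" where
  "E A c k n = (if n = 0 then A k else (\<Sum>l=1..n. A (k + l) * Bseq c n l))"

lemma E_rec: "E A c k (Suc n) = (\<Sum>i\<le>n. real (n choose i) * E A c (Suc k) i * c (Suc n - i))"
proof -
  define X where "X i l = real (n choose i) * c (Suc n - i) * Bseq c i l" for i l
  have L: "E A c k (Suc n) = A (Suc k) * c (Suc n) + (\<Sum>l\<in>{1..n}. A (Suc k + l) * (\<Sum>i\<in>{l..n}. X i l))"
  proof -
    have "E A c k (Suc n) = (\<Sum>l\<in>{Suc 0..Suc n}. A (k + l) * Bseq c (Suc n) l)" by (simp add: E_def)
    also have "\<dots> = (\<Sum>l\<in>{0..n}. A (k + Suc l) * Bseq c (Suc n) (Suc l))"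
      by (subst sum.atLeast_Suc_atMost_Suc_shift) (simp add: comp_def)
    also have "\<dots> = A (Suc k) * c (Suc n) + (\<Sum>l\<in>{Suc 0..n}. A (k + Suc l) * Bseq c (Suc n) (Suc l))"
      by (subst sum.atLeast_Suc_atMost) auto
    also have "(\<Sum>l\<in>{Suc 0..n}. A (k + Suc l) * Bseq c (Suc n) (Suc l)) = (\<Sum>l\<in>{1..n}. A (Suc k + l) * (\<Sum>i\<in>{l..n}. X i l))"
      by (intro sum.cong refl) (auto simp: Bseq_Suc X_def)
    finally show ?thesis .
  qed
  have R: "(\<Sum>i\<le>n. real (n choose i) * E A c (Suc k) i * c (Suc n - i)) =
     A (Suc k) * c (Suc n) + (\<Sum>i\<in>{1..n}. (\<Sum>l\<in>{1..i}. A (Suc k + l) * X i l))"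
  proof -
    have "{..n} = insert 0 {1..n}" by auto
    then have "(\<Sum>i\<le>n. real (n choose i) * E A c (Suc k) i * c (Suc n - i)) =
       A (Suc k) * c (Suc n) + (\<Sum>i\<in>{1..n}. real (n choose i) * E A c (Suc k) i * c (Suc n - i))"
      by (simp add: E_def)
    also have "(\<Sum>i\<in>{1..n}. real (n choose i) * E A c (Suc k) i * c (Suc n - i)) = (\<Sum>i\<in>{1..n}. (\<Sum>l\<in>{1..i}. A (Suc k + l) * X i l))"
      by (intro sum.cong refl) (auto simp: E_def X_def sum_distrib_left sum_distrib_right algebra_simps)
    finally show ?thesis .
  qed
  have "(\<Sum>l\<in>{1..n}. A (Suc k + l) * (\<Sum>i\<in>{l..n}. X i l)) = (\<Sum>l\<in>{1..n}. \<Sum>i\<in>{1..n}. A (Suc k + l) * X i l)"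
  proof (rule sum.cong[OF refl])
    fix l assume l: "l \<in> {1..n}"
    have "(\<Sum>i\<in>{l..n}. X i l) = (\<Sum>i\<in>{1..n}. X i l)"
      using l by (intro sum.mono_neutral_left) (auto simp: X_def Bseq_vanish)
    then show "A (Suc k + l) * (\<Sum>i\<in>{l..n}. X i l) = (\<Sum>i\<in>{1..n}. A (Suc k + l) * X i l)"
      by (simp add: sum_distrib_left)
  qed
  also have "\<dots> = (\<Sum>i\<in>{1..n}. \<Sum>l\<in>{1..n}. A (Suc k + l) * X i l)" by (rule sum.swap)
  also have "\<dots> = (\<Sum>i\<in>{1..n}. \<Sum>l\<in>{1..i}. A (Suc k + l) * X i l)"
  proof (rule sum.cong[OF refl])
    fix i assume i: "i \<in> {1..n}"
    show "(\<Sum>l\<in>{1..n}. A (Suc k + l) * X i l) = (\<Sum>l\<in>{1..i}. A (Suc k + l) * X i l)"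
      using i by (intro sum.mono_neutral_right) (auto simp: X_def Bseq_vanish)
  qed
  finally show ?thesis using L R by simp
qed

lemma comp_bound:
  assumes sg: "smooth g"
    and cb: "\<forall>ks y. set ks \<subseteq> {..<s} \<and> ks \<noteq> [] \<longrightarrow> \<bar>dl ks g y\<bar> \<le> bp \<beta> ks * c (length ks)"
    and \<phi>d: "\<forall>k x. (deriv ^^ k) \<phi> differentiable (at x)"
    and \<phi>b: "\<forall>k\<ge>1. \<forall>x. \<bar>(deriv ^^ k) \<phi> x\<bar> \<le> A k"
  shows "\<forall>(k::nat) js y. length js = n \<longrightarrow> set js \<subseteq> {..<s} \<longrightarrow> (k \<ge> 1 \<or> js \<noteq> []) \<longrightarrow>
     \<bar>dl js (\<lambda>y. (deriv ^^ k) \<phi> (g y)) y\<bar> \<le> bp \<beta> js * E A c k n"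
proof (induct n rule: less_induct)
  case (less n)
  show ?case
  proof (intro allI impI)
    fix k :: nat and js y assume len: "length js = n" and js: "set js \<subseteq> {..<s}" and kjs: "k \<ge> 1 \<or> js \<noteq> []"
    show "\<bar>dl js (\<lambda>y. (deriv ^^ k) \<phi> (g y)) y\<bar> \<le> bp \<beta> js * E A c k n"
    proof (cases js)
      case Nil
      then show ?thesis using kjs \<phi>b len by (auto simp: E_def)
    next
      case (Cons j ks)
      let ?m = "length ks"
      have n: "n = Suc ?m" using len Cons by simp
      have j: "j < s" using js Cons by auto
      have pg: "\<And>y. pd j g y" using sg smooth_pd by blast
      have e: "dpart j (\<lambda>y. (deriv ^^ k) \<phi> (g y)) = (\<lambda>y. (deriv ^^ Suc k) \<phi> (g y) * dpart j g y)"
        using dpart_comp(2)[OF _ pg] \<phi>d by auto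
      have s1: "smooth (\<lambda>y. (deriv ^^ Suc k) \<phi> (g y))" using smooth_comp[OF \<phi>d sg] .
      have s2: "smooth (dpart j g)" using smooth_dpart[OF sg] .
      have fb: "\<forall>ks' y. set ks' \<subseteq> {..<s} \<and> length ks' \<le> ?m \<longrightarrow>
          \<bar>dl ks' (\<lambda>y. (deriv ^^ Suc k) \<phi> (g y)) y\<bar> \<le> bp \<beta> ks' * E A c (Suc k) (length ks')"
      proof (intro allI impI)
        fix ks' y assume h: "set ks' \<subseteq> {..<s} \<and> length ks' \<le> ?m"
        then have "length ks' < n" using n by simp
        from less.hyps[OF this, rule_format, of ks' "Suc k" y] h
        show "\<bar>dl ks' (\<lambda>y. (deriv ^^ Suc k) \<phi> (g y)) y\<bar> \<le> bp \<beta> ks' * E A c (Suc k) (length ks')"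
          by simp
      qed
      have gb: "\<forall>ks' y. set ks' \<subseteq> {..<s} \<and> length ks' \<le> ?m \<longrightarrow>
          \<bar>dl ks' (dpart j g) y\<bar> \<le> bp \<beta> ks' * (\<beta> j * c (Suc (length ks')))"
      proof (intro allI impI)
        fix ks' y assume "set ks' \<subseteq> {..<s} \<and> length ks' \<le> ?m"
        then have "\<bar>dl (j # ks') g y\<bar> \<le> bp \<beta> (j # ks') * c (length (j # ks'))"
          using j by (intro cb[rule_format]) auto
        then show "\<bar>dl ks' (dpart j g) y\<bar> \<le> bp \<beta> ks' * (\<beta> j * c (Suc (length ks')))"
          by (simp add: algebra_simps)
      qed
      have "\<bar>dl js (\<lambda>y. (deriv ^^ k) \<phi> (g y)) y\<bar> = \<bar>dl ks (\<lambda>y. (deriv ^^ Suc k) \<phi> (g y) * dpart j g y) y\<bar>"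
        using Cons e by simp
      also have "\<dots> \<le> bp \<beta> ks * (\<Sum>i\<le>?m. real (?m choose i) * E A c (Suc k) i * (\<beta> j * c (Suc (?m - i))))"
        using prod_bound[OF s1 s2 fb gb] js Cons by auto
      also have "\<dots> = bp \<beta> js * (\<Sum>i\<le>?m. real (?m choose i) * E A c (Suc k) i * c (Suc ?m - i))"
        using Cons by (simp add: sum_distrib_left algebra_simps Suc_diff_le)
      also have "\<dots> = bp \<beta> js * E A c k n" using n E_rec by simp
      finally show ?thesis .
    qed
  qed
qed



lemma lin_dl:
  assumes "finite Q" "\<And>i. i \<in> Q \<Longrightarrow> smooth (h i)"
  shows "dl js (\<lambda>y. (\<Sum>i\<in>Q. w i * h i y) + c) = (\<lambda>y. (\<Sum>i\<in>Q. w i * dl js (h i) y) + (if js = [] then c else 0))"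
proof -
  have s1: "smooth (\<lambda>y. \<Sum>i\<in>Q. w i * h i y)"
    using assms by (intro smooth_sum smooth_mult smooth_const) auto
  have "dl js (\<lambda>y. (\<Sum>i\<in>Q. w i * h i y) + c) = (\<lambda>y. dl js (\<lambda>y. \<Sum>i\<in>Q. w i * h i y) y + dl js (\<lambda>y. c) y)"
    by (rule dl_add[OF s1 smooth_const])
  also have "dl js (\<lambda>y. \<Sum>i\<in>Q. w i * h i y) = (\<lambda>y. \<Sum>i\<in>Q. dl js (\<lambda>y. w i * h i y) y)"
    using assms by (intro dl_sum smooth_mult smooth_const) auto
  also have "\<dots> = (\<lambda>y. \<Sum>i\<in>Q. w i * dl js (h i) y)"
    using assms by (simp add: dl_cmult)
  finally show ?thesis by (simp add: dl_const)
qed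

lemma Bseq_scale: "Bseq (\<lambda>n. r * g n) n k = r ^ k * Bseq g n k"
  by (induct g n k rule: Bseq.induct) (auto simp: sum_distrib_left algebra_simps)

lemma Bseq_nonneg: "(\<And>n. g n \<ge> 0) \<Longrightarrow> Bseq g n k \<ge> 0"
  by (induct g n k rule: Bseq.induct) (auto intro!: sum_nonneg)

lemma Gamma_nonneg: "(\<And>n. A n > 0) \<Longrightarrow> (\<And>l. R l > 0) \<Longrightarrow> Gamma A R l n \<ge> 0"
proof (induct l arbitrary: n)
  case 0 then show ?case by simp
next
  case (Suc l)
  show ?case
  proof (cases "l = 0")
    case True then show ?thesis using Suc.prems(1)[of n] by simp
  next
    case False
    have "0 \<le> A k * R l ^ k * Bseq (Gamma A R l) n k" for k
      using Suc Suc.prems(1)[of k] Suc.prems(2)[of l]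
      by (intro mult_nonneg_nonneg Bseq_nonneg zero_le_power) (auto simp: less_imp_le)
    then show ?thesis using False by (simp add: sum_nonneg)
  qed
qed

definition c0 :: "nat \<Rightarrow> real" where "c0 n = (if n = 1 then 1 else 0)"

lemma Bseq_c0: "1 \<le> n \<Longrightarrow> 1 \<le> l \<Longrightarrow> Bseq c0 n l = (if n = l then 1 else 0)"
proof (induct l arbitrary: n rule: nat_less_induct)
  case (1 l)
  show ?case
  proof (cases l)
    case 0 then show ?thesis using 1 by simp
  next
    case (Suc l')
    show ?thesis
    proof (cases l')
      case 0 then show ?thesis using Suc by (simp add: c0_def)
    next
      case (Suc k)
      have "Bseq c0 n l = (\<Sum>i=Suc k..n - 1. real (n - 1 choose i) * c0 (n - i) * Bseq c0 i (Suc k))"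
        using Suc \<open>l = Suc l'\<close> by simp
      also have "\<dots> = (\<Sum>i=Suc k..n - 1. if i = Suc k then (if n = Suc (Suc k) then 1 else 0) else 0)"
      proof (rule sum.cong[OF refl])
        fix i assume i: "i \<in> {Suc k..n - 1}"
        have "Bseq c0 i (Suc k) = (if i = Suc k then 1 else 0)"
          using 1(1)[rule_format, of "Suc k" i] i Suc \<open>l = Suc l'\<close> by auto
        then show "real (n - 1 choose i) * c0 (n - i) * Bseq c0 i (Suc k) = (if i = Suc k then (if n = Suc (Suc k) then 1 else 0) else 0)"
          using i by (auto simp: c0_def)
      qed
      also have "\<dots> = (if n = l then 1 else 0)"
        by (subst sum.delta) (auto simp: Suc \<open>l = Suc l'\<close>)
      finally show ?thesis .
    qed
  qed
qed

lemma E_c0: "1 \<le> n \<Longrightarrow> E A c0 0 n = A n"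
proof -
  assume n: "1 \<le> n"
  have "E A c0 0 n = (\<Sum>l=1..n. A l * Bseq c0 n l)" using n by (simp add: E_def)
  also have "\<dots> = (\<Sum>l=1..n. if l = n then A l else 0)"
    using n by (intro sum.cong refl) (auto simp: Bseq_c0)
  also have "\<dots> = A n" using n by (subst sum.delta) auto
  finally show ?thesis .
qed

lemma E_Gamma: "1 \<le> l \<Longrightarrow> 1 \<le> n \<Longrightarrow> E A (\<lambda>n. R l * Gamma A R l n) 0 n = Gamma A R (Suc l) n"
  by (simp add: E_def Bseq_scale algebra_simps)

lemma Gamma_1: "1 \<le> n \<Longrightarrow> Gamma A R 1 n = A n" by simp



lemma bp_pos: "(\<And>j. \<beta> j > 0) \<Longrightarrow> bp \<beta> ks > 0"
  by (induct ks) auto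

lemma dl_coord: "dl (j # ks) (\<lambda>y. y i) = (\<lambda>y. if ks = [] then (if i = j then 1 else 0) else 0)"
proof -
  have "dpart j (\<lambda>y. y i) = (\<lambda>y. if i = j then 1 else 0)" using dpart_coord(2) by auto
  then show ?thesis by (cases "i = j") (auto simp: dl_const)
qed

lemma net_smooth:
  assumes sm\<sigma>: "\<forall>n x. (deriv ^^ n) \<sigma> differentiable (at x)"
  shows "smooth (\<lambda>x. net d W v \<sigma> x l p)"
proof (induct l arbitrary: p)
  case 0
  show ?case by (simp, intro smooth_add smooth_sum smooth_mult smooth_const smooth_coord) auto
next
  case (Suc l)
  have "smooth (\<lambda>x. \<sigma> (net d W v \<sigma> x l q))" for q
    using smooth_comp[OF sm\<sigma> Suc, of 0] by simp
  then show ?case by (simp, intro smooth_add smooth_sum smooth_mult smooth_const) auto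
qed

lemma layer0_bound:
  assumes d0: "d 0 = s" and W0: "\<forall>j<s. \<forall>p<d 1. \<bar>W 0 p j\<bar> \<le> \<beta> j" and q: "q < d 1"
    and ks: "set ks \<subseteq> {..<s}" "ks \<noteq> []"
  shows "\<bar>dl ks (\<lambda>x. net d W v \<sigma> x 0 q) y\<bar> \<le> bp \<beta> ks * c0 (length ks)"
proof -
  have e: "(\<lambda>x. net d W v \<sigma> x 0 q) = (\<lambda>x. (\<Sum>i\<in>{..<s}. W 0 q i * x i) + v 0 q)" using d0 by simp
  have dlx: "dl ks (\<lambda>x. net d W v \<sigma> x 0 q) = (\<lambda>x. (\<Sum>i\<in>{..<s}. W 0 q i * dl ks (\<lambda>y. y i) x))"
    unfolding e using ks by (subst lin_dl) (auto intro: smooth_coord)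
  obtain j ks' where ks': "ks = j # ks'" using ks by (cases ks) auto
  have j: "j < s" using ks ks' by auto
  show ?thesis
  proof (cases "ks' = []")
    case True
    have "dl ks (\<lambda>x. net d W v \<sigma> x 0 q) y = (\<Sum>i\<in>{..<s}. W 0 q i * dl ks (\<lambda>y. y i) y)"
      using dlx by simp
    also have "\<dots> = (\<Sum>i\<in>{..<s}. if i = j then W 0 q i else 0)"
      unfolding ks' dl_coord using True by (intro sum.cong) auto
    also have "\<dots> = W 0 q j" using j by (subst sum.delta) auto
    finally show ?thesis using W0 j q True ks' by (simp add: c0_def)
  next
    case False
    have "dl ks (\<lambda>x. net d W v \<sigma> x 0 q) y = (\<Sum>i\<in>{..<s}. W 0 q i * dl ks (\<lambda>y. y i) y)"
      using dlx by simp
    also have "\<dots> = 0"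
      unfolding ks' dl_coord using False by simp
    finally have "dl ks (\<lambda>x. net d W v \<sigma> x 0 q) y = 0" .
    then show ?thesis using False ks' by (simp add: c0_def)
  qed
qed

lemma layer_step:
  assumes sm\<sigma>: "\<forall>n x. (deriv ^^ n) \<sigma> differentiable (at x)"
    and \<beta>pos: "\<forall>j. \<beta> j > 0"
    and hb: "\<forall>q<d (Suc l). \<forall>ks y. set ks \<subseteq> {..<s} \<and> ks \<noteq> [] \<longrightarrow>
        \<bar>dl ks (\<lambda>x. \<sigma> (net d W v \<sigma> x l q)) y\<bar> \<le> bp \<beta> ks * K (length ks)"
    and K: "\<forall>n. K n \<ge> 0"
    and Wb: "(\<Sum>q<d (Suc l). \<bar>W (Suc l) p q\<bar>) \<le> R"
    and ks: "set ks \<subseteq> {..<s}" "ks \<noteq> []"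
  shows "\<bar>dl ks (\<lambda>x. net d W v \<sigma> x (Suc l) p) y\<bar> \<le> bp \<beta> ks * (R * K (length ks))"
proof -
  have sm: "smooth (\<lambda>x. \<sigma> (net d W v \<sigma> x l q))" for q
    using smooth_comp[OF sm\<sigma> net_smooth[OF sm\<sigma>], of 0] by simp
  have e: "(\<lambda>x. net d W v \<sigma> x (Suc l) p) = (\<lambda>x. (\<Sum>q\<in>{..<d (Suc l)}. W (Suc l) p q * \<sigma> (net d W v \<sigma> x l q)) + v (Suc l) p)"
    by simp
  have dlx: "dl ks (\<lambda>x. net d W v \<sigma> x (Suc l) p) y = (\<Sum>q\<in>{..<d (Suc l)}. W (Suc l) p q * dl ks (\<lambda>x. \<sigma> (net d W v \<sigma> x l q)) y)"
    unfolding e using ks by (subst lin_dl) (auto intro: sm)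
  have bK: "0 \<le> bp \<beta> ks * K (length ks)" using bp_pos[of \<beta> ks] \<beta>pos K by (simp add: less_imp_le)
  have "\<bar>dl ks (\<lambda>x. net d W v \<sigma> x (Suc l) p) y\<bar> \<le> (\<Sum>q\<in>{..<d (Suc l)}. \<bar>W (Suc l) p q\<bar> * \<bar>dl ks (\<lambda>x. \<sigma> (net d W v \<sigma> x l q)) y\<bar>)"
    unfolding dlx abs_mult[symmetric] by (rule sum_abs)
  also have "\<dots> \<le> (\<Sum>q\<in>{..<d (Suc l)}. \<bar>W (Suc l) p q\<bar> * (bp \<beta> ks * K (length ks)))"
    using hb ks by (intro sum_mono mult_left_mono) auto
  also have "\<dots> = (\<Sum>q\<in>{..<d (Suc l)}. \<bar>W (Suc l) p q\<bar>) * (bp \<beta> ks * K (length ks))"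
    by (simp add: sum_distrib_right)
  also have "\<dots> \<le> R * (bp \<beta> ks * K (length ks))"
    using Wb bK by (rule mult_right_mono)
  finally show ?thesis by (simp add: algebra_simps)
qed

lemma layers_bound:
  assumes d0: "d 0 = s"
    and sm\<sigma>: "\<forall>n x. (deriv ^^ n) \<sigma> differentiable (at x)"
    and \<beta>pos: "\<forall>j. \<beta> j > 0" and Rpos: "\<forall>l. R l > 0" and Apos: "\<forall>n. A n > 0"
    and W0: "\<forall>j<s. \<forall>p<d 1. \<bar>W 0 p j\<bar> \<le> \<beta> j"
    and Wl: "\<forall>l. 1 \<le> l \<and> l \<le> L \<longrightarrow> (\<forall>p<d (l+1). (\<Sum>q<d l. \<bar>W l p q\<bar>) \<le> R l)"
    and \<sigma>bd: "\<forall>n\<ge>1. \<forall>x. \<bar>(deriv ^^ n) \<sigma> x\<bar> \<le> A n"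
  shows "1 \<le> l \<Longrightarrow> l \<le> L \<Longrightarrow> p < d (Suc l) \<Longrightarrow> set ks \<subseteq> {..<s} \<Longrightarrow> ks \<noteq> [] \<Longrightarrow>
     \<bar>dl ks (\<lambda>x. net d W v \<sigma> x l p) y\<bar> \<le> bp \<beta> ks * (R l * Gamma A R l (length ks))"
proof (induct l arbitrary: p ks y)
  case 0 then show ?case by simp
next
  case (Suc l)
  have \<sigma>bd': "\<forall>k\<ge>1. \<forall>x. \<bar>(deriv ^^ k) \<sigma> x\<bar> \<le> A k" using \<sigma>bd by blast
  have Gnn: "\<forall>n. Gamma A R (Suc l) n \<ge> 0" using Gamma_nonneg Apos Rpos by blast
  have Wb: "(\<Sum>q<d (Suc l). \<bar>W (Suc l) p q\<bar>) \<le> R (Suc l)" using Wl Suc.prems by auto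
  have hb: "\<forall>q<d (Suc l). \<forall>ks y. set ks \<subseteq> {..<s} \<and> ks \<noteq> [] \<longrightarrow>
        \<bar>dl ks (\<lambda>x. \<sigma> (net d W v \<sigma> x l q)) y\<bar> \<le> bp \<beta> ks * Gamma A R (Suc l) (length ks)"
  proof (intro allI impI)
    fix q ks y assume q: "q < d (Suc l)" and ks: "set ks \<subseteq> {..<s} \<and> ks \<noteq> []"
    show "\<bar>dl ks (\<lambda>x. \<sigma> (net d W v \<sigma> x l q)) y\<bar> \<le> bp \<beta> ks * Gamma A R (Suc l) (length ks)"
    proof (cases "l = 0")
      case True
      have cb: "\<forall>ks y. set ks \<subseteq> {..<s} \<and> ks \<noteq> [] \<longrightarrow> \<bar>dl ks (\<lambda>x. net d W v \<sigma> x 0 q) y\<bar> \<le> bp \<beta> ks * c0 (length ks)"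
        using layer0_bound[where d=d and s=s and W=W and \<beta>=\<beta>, OF d0 W0] q True by (simp add: One_nat_def)
      from comp_bound[OF net_smooth[OF sm\<sigma>] cb sm\<sigma> \<sigma>bd', where n="length ks", THEN spec[of _ 0], THEN spec[of _ ks], THEN spec[of _ y]] ks
      have "\<bar>dl ks (\<lambda>x. \<sigma> (net d W v \<sigma> x 0 q)) y\<bar> \<le> bp \<beta> ks * E A c0 0 (length ks)" by simp
      also have "E A c0 0 (length ks) = Gamma A R (Suc l) (length ks)"
        using ks True E_c0[of "length ks" A] by (cases ks) auto
      finally show ?thesis using True by simp
    next
      case False
      have cb: "\<forall>ks y. set ks \<subseteq> {..<s} \<and> ks \<noteq> [] \<longrightarrow> \<bar>dl ks (\<lambda>x. net d W v \<sigma> x l q) y\<bar> \<le> bp \<beta> ks * (R l * Gamma A R l (length ks))"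
        using Suc.hyps Suc.prems q False by auto
      from comp_bound[OF net_smooth[OF sm\<sigma>] cb sm\<sigma> \<sigma>bd', where n="length ks", THEN spec[of _ 0], THEN spec[of _ ks], THEN spec[of _ y]] ks
      have "\<bar>dl ks (\<lambda>x. \<sigma> (net d W v \<sigma> x l q)) y\<bar> \<le> bp \<beta> ks * E A (\<lambda>n. R l * Gamma A R l n) 0 (length ks)" by simp
      also have "E A (\<lambda>n. R l * Gamma A R l n) 0 (length ks) = Gamma A R (Suc l) (length ks)"
        using ks False E_Gamma[of l "length ks" A R] by (cases ks) auto
      finally show ?thesis .
    qed
  qed
  show ?case using layer_step[OF sm\<sigma> \<beta>pos hb Gnn Wb] Suc.prems by auto
qed



fun N :: "nat \<Rightarrow> nat \<Rightarrow> nat \<Rightarrow> real" where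
  "N 0 k b = (if k = 0 then 1 else 0)"
| "N (Suc n) k b = real b * N n k b + (case k of 0 \<Rightarrow> 0 | Suc k' \<Rightarrow> N n k' (Suc b))"

lemma N_gt: "n < k \<Longrightarrow> N n k b = 0"
  by (induct n arbitrary: k b) (auto split: nat.split)

lemma N_last: "N (Suc n) k b = real (k + b) * N n k b + (case k of 0 \<Rightarrow> 0 | Suc k' \<Rightarrow> N n k' b)"
proof (induct n arbitrary: k b)
  case 0 then show ?case by (cases k) auto
next
  case (Suc n)
  show ?case
  proof (cases k)
    case 0
    then show ?thesis using Suc[of 0 b] by simp
  next
    case (Suc k')
    note ih = Suc.hyps
    have "N (Suc (Suc n)) k b = real b * N (Suc n) k b + N (Suc n) k' (Suc b)" using Suc by simp
    also have "\<dots> = real b * (real (k + b) * N n k b + N n k' b)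
        + (real (k' + Suc b) * N n k' (Suc b) + (case k' of 0 \<Rightarrow> 0 | Suc k'' \<Rightarrow> N n k'' (Suc b)))"
      using ih[of k b] ih[of k' "Suc b"] Suc by simp
    also have "\<dots> = real (k + b) * (real b * N n k b + N n k' (Suc b))
        + (real b * N n k' b + (case k' of 0 \<Rightarrow> 0 | Suc k'' \<Rightarrow> N n k'' (Suc b)))"
      using Suc by (simp add: algebra_simps)
    also have "\<dots> = real (k + b) * N (Suc n) k b + N (Suc n) k' b"
      using Suc by simp
    finally show ?thesis using Suc by simp
  qed
qed

lemma N_Stirling: "N n k 0 = real (Stirling n k)"
proof (induct n arbitrary: k)
  case 0 then show ?case by (cases k) auto
next
  case (Suc n)
  then show ?case by (cases k) (simp_all del: N.simps(2) add: N_last[of n _ 0] algebra_simps)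
qed

definition Box :: "nat \<Rightarrow> (nat \<Rightarrow> nat) \<Rightarrow> (nat \<Rightarrow> nat) set" where
  "Box s \<nu> = {m. (\<forall>j<s. m j \<le> \<nu> j) \<and> (\<forall>j\<ge>s. m j = 0)}"

lemma finite_Box: "finite (Box s \<nu>)"
proof -
  have "Box s \<nu> \<subseteq> (\<lambda>f j. if j < s then f j else 0) ` (PiE {..<s} (\<lambda>j. {0..\<nu> j}))"
  proof
    fix m assume m: "m \<in> Box s \<nu>"
    have "m = (\<lambda>j. if j < s then restrict m {..<s} j else 0)"
      using m by (auto simp: Box_def)
    moreover have "restrict m {..<s} \<in> PiE {..<s} (\<lambda>j. {0..\<nu> j})" using m by (auto simp: Box_def)
    ultimately show "m \<in> (\<lambda>f j. if j < s then f j else 0) ` (PiE {..<s} (\<lambda>j. {0..\<nu> j}))" by blast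
  qed
  then show ?thesis by (rule finite_subset) (intro finite_imageI finite_PiE, auto)
qed

lemma Box_zero: "Box s (\<lambda>_. 0) = {\<lambda>_. 0}"
  by (auto simp: Box_def fun_eq_iff) (metis not_le)

lemma box_identity:
  fixes M :: "(nat \<Rightarrow> nat) \<Rightarrow> real"
  assumes j: "j < s"
  shows "(\<Sum>m\<in>Box s (\<nu>(j := Suc (\<nu> j))). M m * (\<Prod>k<s. N ((\<nu>(j := Suc (\<nu> j))) k) (m k) (b k))) =
     real (b j) * (\<Sum>m\<in>Box s \<nu>. M m * (\<Prod>k<s. N (\<nu> k) (m k) (b k)))
   + (\<Sum>m\<in>Box s \<nu>. M (m(j := Suc (m j))) * (\<Prod>k<s. N (\<nu> k) (m k) ((b(j := Suc (b j))) k)))"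
proof -
  define \<nu>' where "\<nu>' = \<nu>(j := Suc (\<nu> j))"
  define Rst where "Rst m = (\<Prod>k\<in>{..<s} - {j}. N (\<nu> k) (m k) (b k))" for m
  define h where "h m = m(j := Suc (m j))" for m :: "nat \<Rightarrow> nat"
  have js: "j \<in> {..<s}" using j by simp
  have p1: "(\<Prod>k<s. N (\<nu>' k) (m k) (b k)) = N (Suc (\<nu> j)) (m j) (b j) * Rst m" for m
    unfolding Rst_def \<nu>'_def by (subst prod.remove[OF _ js]) (auto intro!: prod.cong)
  have p2: "(\<Prod>k<s. N (\<nu> k) (m k) (b k)) = N (\<nu> j) (m j) (b j) * Rst m" for m
    unfolding Rst_def by (subst prod.remove[OF _ js]) auto
  have p3: "(\<Prod>k<s. N (\<nu> k) (m k) ((b(j := Suc (b j))) k)) = N (\<nu> j) (m j) (Suc (b j)) * Rst m" for m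
    unfolding Rst_def by (subst prod.remove[OF _ js]) (auto intro!: prod.cong)
  have Rh: "Rst (h m) = Rst m" for m unfolding Rst_def h_def by (auto intro!: prod.cong)
  have fin: "finite (Box s \<nu>)" "finite (Box s \<nu>')" by (rule finite_Box)+
  have sub: "Box s \<nu> \<subseteq> Box s \<nu>'" by (auto simp: Box_def \<nu>'_def le_SucI)
  have LHS: "(\<Sum>m\<in>Box s \<nu>'. M m * (\<Prod>k<s. N (\<nu>' k) (m k) (b k))) =
     (\<Sum>m\<in>Box s \<nu>'. real (b j) * (M m * (N (\<nu> j) (m j) (b j) * Rst m)))
     + (\<Sum>m\<in>Box s \<nu>'. (case m j of 0 \<Rightarrow> 0 | Suc k' \<Rightarrow> M m * N (\<nu> j) k' (Suc (b j)) * Rst m))"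
    unfolding p1 by (subst sum.distrib[symmetric], intro sum.cong refl) (auto simp: algebra_simps split: nat.split)
  have T1: "(\<Sum>m\<in>Box s \<nu>'. real (b j) * (M m * (N (\<nu> j) (m j) (b j) * Rst m))) =
      real (b j) * (\<Sum>m\<in>Box s \<nu>. M m * (\<Prod>k<s. N (\<nu> k) (m k) (b k)))"
  proof -
    have "(\<Sum>m\<in>Box s \<nu>'. real (b j) * (M m * (N (\<nu> j) (m j) (b j) * Rst m))) =
        (\<Sum>m\<in>Box s \<nu>. real (b j) * (M m * (N (\<nu> j) (m j) (b j) * Rst m)))"
    proof (rule sum.mono_neutral_right[OF fin(2) sub])
      show "\<forall>m\<in>Box s \<nu>' - Box s \<nu>. real (b j) * (M m * (N (\<nu> j) (m j) (b j) * Rst m)) = 0"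
      proof
        fix m assume m: "m \<in> Box s \<nu>' - Box s \<nu>"
        then have "m j = Suc (\<nu> j)" unfolding Box_def \<nu>'_def
          by (auto split: if_splits simp: le_Suc_eq)
        then show "real (b j) * (M m * (N (\<nu> j) (m j) (b j) * Rst m)) = 0" by (simp add: N_gt)
      qed
    qed
    then show ?thesis by (simp add: p2 sum_distrib_left)
  qed
  have T2: "(\<Sum>m\<in>Box s \<nu>'. (case m j of 0 \<Rightarrow> 0 | Suc k' \<Rightarrow> M m * N (\<nu> j) k' (Suc (b j)) * Rst m)) =
      (\<Sum>m\<in>Box s \<nu>. M (m(j := Suc (m j))) * (\<Prod>k<s. N (\<nu> k) (m k) ((b(j := Suc (b j))) k)))"
  proof -
    let ?g = "\<lambda>m. (case m j of 0 \<Rightarrow> 0 | Suc k' \<Rightarrow> M m * N (\<nu> j) k' (Suc (b j)) * Rst m)"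
    have im: "h ` Box s \<nu> \<subseteq> Box s \<nu>'" using j by (auto simp: Box_def \<nu>'_def h_def)
    have "sum ?g (Box s \<nu>') = sum ?g (h ` Box s \<nu>)"
    proof (rule sum.mono_neutral_right[OF fin(2) im])
      show "\<forall>m\<in>Box s \<nu>' - h ` Box s \<nu>. ?g m = 0"
      proof
        fix m assume m: "m \<in> Box s \<nu>' - h ` Box s \<nu>"
        show "?g m = 0"
        proof (cases "m j")
          case 0 then show ?thesis by simp
        next
          case (Suc k')
          have "m(j := k') \<in> Box s \<nu>" using m Suc j unfolding Box_def \<nu>'_def
            by (auto split: if_splits)
          moreover have "h (m(j := k')) = m" using Suc by (auto simp: h_def)
          ultimately show ?thesis using m by (metis DiffD2 image_eqI)
        qed
      qed
    qed
    also have "\<dots> = sum (?g \<circ> h) (Box s \<nu>)"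
    proof (rule sum.reindex, rule inj_onI)
      fix a c assume "h a = h c"
      then have e: "\<And>k. (h a) k = (h c) k" by simp
      show "a = c"
      proof
        fix k show "a k = c k" using e[of k] by (cases "k = j") (auto simp: h_def)
      qed
    qed
    also have "\<dots> = (\<Sum>m\<in>Box s \<nu>. M (m(j := Suc (m j))) * (\<Prod>k<s. N (\<nu> k) (m k) ((b(j := Suc (b j))) k)))"
    proof (rule sum.cong[OF refl])
      fix m assume "m \<in> Box s \<nu>"
      have "(?g \<circ> h) m = M (h m) * N (\<nu> j) (m j) (Suc (b j)) * Rst (h m)" by (simp add: h_def)
      then show "(?g \<circ> h) m = M (m(j := Suc (m j))) * (\<Prod>k<s. N (\<nu> k) (m k) ((b(j := Suc (b j))) k))"
        unfolding p3 Rh by (simp add: h_def)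
    qed
    finally show ?thesis .
  qed
  show ?thesis using LHS T1 T2 unfolding \<nu>'_def by simp
qed



definition psi :: "nat \<Rightarrow> real \<Rightarrow> real" where
  "psi a = (deriv ^^ a) (\<lambda>t. sin (2 * pi * t))"

lemma DERIV_differentiable': "(f has_real_derivative D) (at x) \<Longrightarrow> f differentiable (at x)"
  using DERIV_deriv_iff_real_differentiable DERIV_imp_deriv by metis

lemma psi_eq: "psi a = (\<lambda>t. (2 * pi) ^ a * sin (2 * pi * t + real a * pi / 2))"
proof (induct a)
  case 0 then show ?case by (simp add: psi_def)
next
  case (Suc a)
  have "psi (Suc a) = deriv (psi a)" by (simp add: psi_def)
  also have "\<dots> = (\<lambda>t. (2 * pi) ^ Suc a * sin (2 * pi * t + real (Suc a) * pi / 2))"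
  proof
    fix t
    have "((\<lambda>t. (2 * pi) ^ a * sin (2 * pi * t + real a * pi / 2)) has_real_derivative
        (2 * pi) ^ a * (cos (2 * pi * t + real a * pi / 2) * (2 * pi))) (at t)"
      by (auto intro!: derivative_eq_intros)
    moreover have "(2 * pi) ^ a * (cos (2 * pi * t + real a * pi / 2) * (2 * pi)) =
        (2 * pi) ^ Suc a * sin (2 * pi * t + real (Suc a) * pi / 2)"
    proof -
      have "sin (2 * pi * t + real (Suc a) * pi / 2) = sin ((2 * pi * t + real a * pi / 2) + pi / 2)"
        by (simp add: algebra_simps add_divide_distrib)
      also have "\<dots> = cos (2 * pi * t + real a * pi / 2)" by (simp add: sin_add)
      finally show ?thesis by simp
    qed
    ultimately show "deriv (psi a) t = (2 * pi) ^ Suc a * sin (2 * pi * t + real (Suc a) * pi / 2)"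
      using Suc DERIV_imp_deriv by metis
  qed
  finally show ?case .
qed

lemma psi_deriv: "(psi a has_real_derivative psi (Suc a) t) (at t)"
proof -
  have "psi (Suc a) = deriv (psi a)" by (simp add: psi_def)
  moreover have "psi a differentiable (at t)" unfolding psi_eq
    by (rule DERIV_differentiable') (auto intro!: derivative_eq_intros)
  ultimately show ?thesis using DERIV_deriv_iff_real_differentiable by simp
qed

lemma psi_bound: "\<bar>psi a t\<bar> \<le> (2 * pi) ^ a"
  unfolding psi_eq by (simp add: abs_mult)

lemma sin_smooth: "\<forall>k x. (deriv ^^ k) (\<lambda>t. sin (2 * pi * t)) differentiable (at x)"
  using psi_deriv DERIV_differentiable' unfolding psi_def by blast

lemma psi0: "psi 0 = (\<lambda>t. sin (2 * pi * t))" by (simp add: psi_def)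

definition Psi :: "(nat \<Rightarrow> real) \<Rightarrow> (nat \<Rightarrow> real)" where
  "Psi y = (\<lambda>j. sin (2 * pi * y j))"

lemma dpart_HPsi:
  assumes "pd j H (Psi y)"
  shows "pd j (\<lambda>y. H (Psi y)) y" "dpart j (\<lambda>y. H (Psi y)) y = dpart j H (Psi y) * psi 1 (y j)"
proof -
  have e: "(\<lambda>t. H (Psi (y(j := t)))) = (\<lambda>t. (\<lambda>u. H ((Psi y)(j := u))) (sin (2 * pi * t)))"
    by (auto simp: Psi_def fun_eq_iff intro!: arg_cong[where f = H])
  have d1: "((\<lambda>u. H ((Psi y)(j := u))) has_real_derivative dpart j H (Psi y)) (at (sin (2 * pi * y j)))"
    using pdD[OF assms] by (simp add: Psi_def)
  have d2: "((\<lambda>t. sin (2 * pi * t)) has_real_derivative psi 1 (y j)) (at (y j))"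
    using psi_deriv[of 0 "y j"] by (simp add: psi0)
  have "((\<lambda>t. H (Psi (y(j := t)))) has_real_derivative dpart j H (Psi y) * psi 1 (y j)) (at (y j))"
    unfolding e by (rule DERIV_chain2[OF d1 d2])
  from pdI[of "\<lambda>y. H (Psi y)", OF this]
  show "pd j (\<lambda>y. H (Psi y)) y" "dpart j (\<lambda>y. H (Psi y)) y = dpart j H (Psi y) * psi 1 (y j)" by auto
qed

lemma smooth_psi_coord: "smooth (\<lambda>y. psi a (y j))"
  using smooth_comp[OF sin_smooth smooth_coord, of a j] unfolding psi_def by simp

lemma sm_HPsi: "sm n H \<Longrightarrow> sm n (\<lambda>y. H (Psi y))"
proof (induct n arbitrary: H)
  case 0 then show ?case using dpart_HPsi(1) sm_pd by auto
next
  case (Suc n)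
  have pH: "\<And>j y. pd j H y" using Suc.prems sm_pd by blast
  have e: "dpart j (\<lambda>y. H (Psi y)) = (\<lambda>y. dpart j H (Psi y) * psi 1 (y j))" for j
    using dpart_HPsi(2)[OF pH] by auto
  have "sm n (\<lambda>y. dpart j H (Psi y) * psi 1 (y j))" for j
    using Suc smooth_psi_coord unfolding smooth_def by (intro sm_mult) auto
  then show ?case using pH dpart_HPsi(1) by (simp only: e sm.simps) blast
qed

lemma smooth_HPsi: "smooth H \<Longrightarrow> smooth (\<lambda>y. H (Psi y))"
  unfolding smooth_def using sm_HPsi by blast

definition C :: "(nat \<times> nat) list \<Rightarrow> (nat \<Rightarrow> real) \<Rightarrow> real" where
  "C bl y = prod_list (map (\<lambda>b. psi (snd b) (y (fst b))) bl)"

lemma C_Nil[simp]: "C [] y = 1" and C_Cons: "C (b # bl) y = psi (snd b) (y (fst b)) * C bl y"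
  by (simp_all add: C_def)

lemma smooth_C: "smooth (C bl)"
proof (induct bl)
  case Nil
  have "C [] = (\<lambda>y. 1)" by auto
  then show ?case using smooth_const by simp
next
  case (Cons b bl)
  have "C (b # bl) = (\<lambda>y. psi (snd b) (y (fst b)) * C bl y)" by (auto simp: C_Cons)
  then show ?case using smooth_mult[OF smooth_psi_coord Cons] by simp
qed

lemma C_bound: "\<bar>C bl y\<bar> \<le> (2 * pi) ^ sum_list (map snd bl)"
proof (induct bl)
  case Nil then show ?case by simp
next
  case (Cons b bl)
  have "\<bar>C (b # bl) y\<bar> = \<bar>psi (snd b) (y (fst b))\<bar> * \<bar>C bl y\<bar>" by (simp add: C_Cons abs_mult)
  also have "\<dots> \<le> (2 * pi) ^ snd b * (2 * pi) ^ sum_list (map snd bl)"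
    using Cons psi_bound by (intro mult_mono) auto
  finally show ?case by (simp add: power_add)
qed

definition bupd :: "(nat \<times> nat) list \<Rightarrow> nat \<Rightarrow> (nat \<times> nat) list" where
  "bupd bl i = bl[i := (fst (bl ! i), Suc (snd (bl ! i)))]"

definition DC :: "(nat \<times> nat) list \<Rightarrow> nat \<Rightarrow> (nat \<Rightarrow> real) \<Rightarrow> real" where
  "DC bl j y = (\<Sum>i<length bl. if fst (bl ! i) = j then C (bupd bl i) y else 0)"

lemma bupd_Cons0: "bupd (b # bl) 0 = (fst b, Suc (snd b)) # bl" by (simp add: bupd_def)
lemma bupd_ConsS: "bupd (b # bl) (Suc i) = b # bupd bl i" by (simp add: bupd_def)

lemma C_deriv: "((\<lambda>t. C bl (y(j := t))) has_real_derivative DC bl j y) (at (y j))"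
proof (induct bl)
  case Nil
  show ?case by (simp add: DC_def)
next
  case (Cons b bl)
  obtain j' a where b: "b = (j', a)" by (cases b)
  have DCc: "DC ((j', a) # bl) j y = (if j' = j then psi (Suc a) (y j) * C bl y else 0) + psi a (y j') * DC bl j y"
    unfolding DC_def length_Cons
    by (simp only: sum.lessThan_Suc_shift nth_Cons_0 nth_Cons_Suc bupd_Cons0 bupd_ConsS C_Cons fst_conv snd_conv)
      (auto simp: sum_distrib_left intro!: sum.cong)
  show ?case
  proof (cases "j' = j")
    case True
    have d: "((\<lambda>t. psi a t * C bl (y(j := t))) has_real_derivative psi (Suc a) (y j) * C bl (y(j := y j)) + DC bl j y * psi a (y j)) (at (y j))"
      by (rule DERIV_mult[OF psi_deriv Cons])
    have ee: "psi (Suc a) (y j) * C bl (y(j := y j)) + DC bl j y * psi a (y j) = psi (Suc a) (y j) * C bl y + psi a (y j) * DC bl j y"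
      by simp
    have "((\<lambda>t. psi a t * C bl (y(j := t))) has_real_derivative psi (Suc a) (y j) * C bl y + psi a (y j) * DC bl j y) (at (y j))"
      using d unfolding ee .
    moreover have fe: "(\<lambda>t. C ((j', a) # bl) (y(j := t))) = (\<lambda>t. psi a t * C bl (y(j := t)))"
      by (rule ext) (simp only: C_Cons True fst_conv snd_conv fun_upd_same)
    moreover have "DC ((j', a) # bl) j y = psi (Suc a) (y j) * C bl y + psi a (y j) * DC bl j y"
      using DCc True by simp
    ultimately show ?thesis unfolding b by (simp only:)
  next
    case False
    have "((\<lambda>t. psi a (y j') * C bl (y(j := t))) has_real_derivative psi a (y j') * DC bl j y) (at (y j))"
      by (rule DERIV_cmult[OF Cons])
    moreover have fe: "(\<lambda>t. C ((j', a) # bl) (y(j := t))) = (\<lambda>t. psi a (y j') * C bl (y(j := t)))"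
      using False by (intro ext) (simp only: C_Cons fst_conv snd_conv fun_upd_other[OF False])
    moreover have "DC ((j', a) # bl) j y = psi a (y j') * DC bl j y"
      using DCc False by simp
    ultimately show ?thesis unfolding b by (simp only:)
  qed
qed

lemma dpart_C: "pd j (C bl) y" "dpart j (C bl) y = DC bl j y"
  using pdI[of "C bl", OF C_deriv] by auto

definition P :: "((nat \<Rightarrow> real) \<Rightarrow> real) \<Rightarrow> (nat \<times> nat) list \<Rightarrow> (nat \<Rightarrow> real) \<Rightarrow> real" where
  "P H bl y = H (Psi y) * C bl y"

lemma smooth_P: "smooth H \<Longrightarrow> smooth (P H bl)"
proof -
  assume "smooth H"
  then have "smooth (\<lambda>y. H (Psi y) * C bl y)" using smooth_mult[OF smooth_HPsi smooth_C] by blast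
  then show ?thesis unfolding P_def[abs_def] .
qed

definition Iset :: "(nat \<times> nat) list \<Rightarrow> nat \<Rightarrow> nat set" where
  "Iset bl j = {i \<in> {..<length bl}. fst (bl ! i) = j}"

lemma finite_Iset: "finite (Iset bl j)" by (simp add: Iset_def)

lemma dpart_P:
  assumes "smooth H"
  shows "dpart j (P H bl) = (\<lambda>y. P (dpart j H) ((j, 1) # bl) y + (\<Sum>i\<in>Iset bl j. P H (bupd bl i) y))"
proof
  fix y
  have pH: "pd j H (Psi y)" using assms smooth_pd by blast
  have e: "P H bl = (\<lambda>y. H (Psi y) * C bl y)" by (simp add: P_def[abs_def])
  have "dpart j (P H bl) y = dpart j H (Psi y) * psi 1 (y j) * C bl y + H (Psi y) * DC bl j y"
    unfolding e using dpart_mult(2)[OF dpart_HPsi(1)[OF pH] dpart_C(1)] dpart_HPsi(2)[OF pH] dpart_C(2) by simp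
  also have "DC bl j y = (\<Sum>i\<in>Iset bl j. C (bupd bl i) y)"
    unfolding DC_def Iset_def by (rule sum.inter_filter[symmetric]) simp
  finally show "dpart j (P H bl) y = P (dpart j H) ((j, 1) # bl) y + (\<Sum>i\<in>Iset bl j. P H (bupd bl i) y)"
    by (simp add: e P_def C_Cons sum_distrib_left algebra_simps)
qed

definition bc :: "(nat \<times> nat) list \<Rightarrow> nat \<Rightarrow> nat" where
  "bc bl k = length (filter (\<lambda>b. fst b = k) bl)"

definition sumA :: "(nat \<times> nat) list \<Rightarrow> nat" where
  "sumA bl = sum_list (map snd bl)"

lemma card_Iset: "card (Iset bl j) = bc bl j"
  unfolding Iset_def bc_def length_filter_conv_card by (rule arg_cong[where f = card]) auto

lemma sumA_upd: "i < length bl \<Longrightarrow> sumA (bupd bl i) = Suc (sumA bl)"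
  unfolding sumA_def bupd_def
proof (induct bl arbitrary: i)
  case Nil then show ?case by simp
next
  case (Cons b bl) then show ?case by (cases i) auto
qed

lemma bc_upd: "i < length bl \<Longrightarrow> bc (bupd bl i) = bc bl"
  unfolding bc_def bupd_def
proof (induct bl arbitrary: i)
  case Nil then show ?case by simp
next
  case (Cons b bl) then show ?case by (cases i) (auto simp: fun_eq_iff)
qed

lemma bc_Cons: "bc ((j, a) # bl) = (bc bl)(j := Suc (bc bl j))"
  by (auto simp: bc_def fun_eq_iff)

definition cnt :: "nat list \<Rightarrow> nat \<Rightarrow> nat" where
  "cnt js = (\<lambda>k. count_list js k)"

lemma cnt_Cons: "cnt (j # js) = (cnt js)(j := Suc (cnt js j))"
  by (auto simp: cnt_def fun_eq_iff)

lemma cnt_Nil: "cnt [] = (\<lambda>_. 0)" by (simp add: cnt_def)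

lemma P_bound:
  "set js \<subseteq> {..<s} \<Longrightarrow> smooth H \<Longrightarrow> (\<forall>ks x. set ks \<subseteq> {..<s} \<longrightarrow> \<bar>dl ks H x\<bar> \<le> M (cnt ks)) \<Longrightarrow>
   \<bar>dl js (P H bl) y\<bar> \<le> (2 * pi) ^ (sumA bl + length js) *
      (\<Sum>m\<in>Box s (cnt js). M m * (\<Prod>k<s. N (cnt js k) (m k) (bc bl k)))"
proof (induct js arbitrary: H M bl y)
  case Nil
  have "\<bar>H (Psi y) * C bl y\<bar> \<le> M (\<lambda>_. 0) * (2 * pi) ^ sumA bl"
    unfolding abs_mult using Nil.prems(3)[rule_format, of "[]" "Psi y"] C_bound[of bl y]
    by (intro mult_mono) (auto simp: cnt_Nil sumA_def)
  then show ?case by (simp add: cnt_Nil Box_zero P_def algebra_simps)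
next
  case (Cons j js)
  have j: "j < s" and js: "set js \<subseteq> {..<s}" using Cons.prems by auto
  let ?\<nu> = "cnt js"
  let ?M1 = "\<lambda>m. M (m(j := Suc (m j)))"
  let ?S1 = "\<Sum>m\<in>Box s ?\<nu>. ?M1 m * (\<Prod>k<s. N (?\<nu> k) (m k) (((bc bl)(j := Suc (bc bl j))) k))"
  let ?S2 = "\<Sum>m\<in>Box s ?\<nu>. M m * (\<Prod>k<s. N (?\<nu> k) (m k) (bc bl k))"
  have sH: "smooth H" using Cons.prems by simp
  have sHj: "smooth (dpart j H)" using smooth_dpart[OF sH] .
  have sP: "\<And>H' bl'. smooth H' \<Longrightarrow> smooth (P H' bl')" using smooth_P .
  have dle: "dl (j # js) (P H bl) = (\<lambda>y. dl js (P (dpart j H) ((j, 1) # bl)) y + (\<Sum>i\<in>Iset bl j. dl js (P H (bupd bl i)) y))"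
  proof -
    have "dl (j # js) (P H bl) = dl js (\<lambda>y. P (dpart j H) ((j, 1) # bl) y + (\<Sum>i\<in>Iset bl j. P H (bupd bl i) y))"
      using dpart_P[OF sH] by simp
    also have "\<dots> = (\<lambda>y. dl js (P (dpart j H) ((j, 1) # bl)) y + dl js (\<lambda>y. \<Sum>i\<in>Iset bl j. P H (bupd bl i) y) y)"
      by (rule dl_add[OF sP[OF sHj] smooth_sum[OF finite_Iset sP[OF sH]]])
    also have "dl js (\<lambda>y. \<Sum>i\<in>Iset bl j. P H (bupd bl i) y) = (\<lambda>y. \<Sum>i\<in>Iset bl j. dl js (P H (bupd bl i)) y)"
      by (rule dl_sum[OF finite_Iset sP[OF sH]])
    finally show ?thesis .
  qed
  have hb1: "\<forall>ks x. set ks \<subseteq> {..<s} \<longrightarrow> \<bar>dl ks (dpart j H) x\<bar> \<le> ?M1 (cnt ks)"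
  proof (intro allI impI)
    fix ks x assume "set ks \<subseteq> {..<s}"
    then have "set (j # ks) \<subseteq> {..<s}" using j by simp
    from Cons.prems(3)[rule_format, OF this] have "\<bar>dl (j # ks) H x\<bar> \<le> M (cnt (j # ks))" .
    then show "\<bar>dl ks (dpart j H) x\<bar> \<le> ?M1 (cnt ks)" by (simp add: cnt_Cons)
  qed
  have B1: "\<bar>dl js (P (dpart j H) ((j, 1) # bl)) y\<bar> \<le> (2 * pi) ^ (Suc (sumA bl) + length js) * ?S1"
    using Cons.hyps[OF js sHj hb1, of "(j, 1) # bl" y] by (simp add: bc_Cons sumA_def fun_upd_def)
  have B2: "\<bar>dl js (P H (bupd bl i)) y\<bar> \<le> (2 * pi) ^ (Suc (sumA bl) + length js) * ?S2" if i: "i \<in> Iset bl j" for i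
  proof -
    have il: "i < length bl" using i by (simp add: Iset_def)
    show ?thesis using Cons.hyps[OF js sH Cons.prems(3), of "bupd bl i" y] by (simp add: sumA_upd[OF il] bc_upd[OF il])
  qed
  have "\<bar>dl (j # js) (P H bl) y\<bar> \<le> \<bar>dl js (P (dpart j H) ((j, 1) # bl)) y\<bar> + (\<Sum>i\<in>Iset bl j. \<bar>dl js (P H (bupd bl i)) y\<bar>)"
    unfolding dle by (rule order_trans[OF abs_triangle_ineq add_left_mono[OF sum_abs]])
  also have "\<dots> \<le> (2 * pi) ^ (Suc (sumA bl) + length js) * ?S1 + (\<Sum>i\<in>Iset bl j. (2 * pi) ^ (Suc (sumA bl) + length js) * ?S2)"
    using B1 B2 by (intro add_mono sum_mono) auto
  also have "\<dots> = (2 * pi) ^ (sumA bl + length (j # js)) * (real (bc bl j) * ?S2 + ?S1)"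
    by (simp add: card_Iset algebra_simps)
  also have "real (bc bl j) * ?S2 + ?S1 = (\<Sum>m\<in>Box s (cnt (j # js)). M m * (\<Prod>k<s. N (cnt (j # js) k) (m k) (bc bl k)))"
    unfolding cnt_Cons using box_identity[OF j, of M ?\<nu> "bc bl"] by simp
  finally show ?case .
qed



lemma count_list_replicate: "count_list (replicate n x) y = (if x = y then n else 0)"
  by (induct n) auto

definition lst :: "nat \<Rightarrow> (nat \<Rightarrow> nat) \<Rightarrow> nat list" where
  "lst s nu = concat (map (\<lambda>j. replicate (nu j) j) [0..<s])"

lemma count_lst: "count_list (lst s nu) k = (if k < s then nu k else 0)"
  unfolding lst_def by (induct s) (auto simp: count_list_replicate)

lemma set_lst: "set (lst s nu) \<subseteq> {..<s}"
  unfolding lst_def by auto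

lemma foldr_lst: "foldr dpart (concat (map (\<lambda>j. replicate (nu j) j) xs)) f = foldr (\<lambda>j g. (dpart j ^^ nu j) g) xs f"
  by (induct xs) (auto simp: foldr_replicate)

lemma mpartial_dl: "mpartial s nu f = dl (rev (lst s nu)) f"
proof -
  have "mpartial s nu f = foldr dpart (lst s nu) f" unfolding mpartial_def lst_def foldr_lst ..
  then show ?thesis by (simp add: dl_def foldr_conv_fold)
qed

lemma bp_count: "set ks \<subseteq> {..<s} \<Longrightarrow> bp \<beta> ks = (\<Prod>k<s. \<beta> k ^ count_list ks k)"
proof (induct ks)
  case Nil then show ?case by simp
next
  case (Cons j ks)
  have j: "j < s" using Cons by simp
  have "(\<Prod>k<s. \<beta> k ^ count_list (j # ks) k) = (\<Prod>k<s. \<beta> k ^ count_list ks k * (if k = j then \<beta> k else 1))"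
    by (intro prod.cong) auto
  also have "\<dots> = (\<Prod>k<s. \<beta> k ^ count_list ks k) * \<beta> j"
    using j by (simp add: prod.distrib prod.delta')
  finally show ?case using Cons by simp
qed

theorem theorem2p1:
  fixes s L :: nat and d :: "nat \<Rightarrow> nat"
    and W :: "nat \<Rightarrow> nat \<Rightarrow> nat \<Rightarrow> real" and v :: "nat \<Rightarrow> nat \<Rightarrow> real"
    and \<sigma> :: "real \<Rightarrow> real"
    and \<beta> R A :: "nat \<Rightarrow> real"
  assumes s: "s \<ge> 1" and L: "L \<ge> 1"
    and d0: "d 0 = s" and dpos: "\<forall>i\<le>L+1. d i \<ge> 1"
    and smooth: "\<forall>n x. (deriv ^^ n) \<sigma> differentiable (at x)"
    and \<beta>pos: "\<forall>j. \<beta> j > 0" and Rpos: "\<forall>l. R l > 0" and Apos: "\<forall>n. A n > 0"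
    and W0: "\<forall>j<s. \<forall>p<d 1. \<bar>W 0 p j\<bar> \<le> \<beta> j"
    and Wl: "\<forall>l. 1 \<le> l \<and> l \<le> L \<longrightarrow> (\<forall>p<d (l+1). (\<Sum>q<d l. \<bar>W l p q\<bar>) \<le> R l)"
    and \<sigma>bd: "\<forall>n\<ge>1. \<forall>x. \<bar>(deriv ^^ n) \<sigma> x\<bar> \<le> A n"
  shows "\<forall>l p nu y. 1 \<le> l \<and> l \<le> L \<and> p < d (l+1) \<and> (\<forall>j\<ge>s. nu j = 0) \<and> nu \<noteq> (\<lambda>_. 0) \<longrightarrow>
     \<bar>mpartial s nu (\<lambda>y. netNP d W v \<sigma> l y p) y\<bar>
        \<le> R l * (\<Prod>j<s. \<beta> j ^ nu j) * Gamma A R l (\<Sum>j<s. nu j)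
   \<and> \<bar>mpartial s nu (\<lambda>y. netP d W v \<sigma> l y p) y\<bar>
        \<le> R l * (2 * pi) ^ (\<Sum>j<s. nu j) *
           (\<Sum>m\<in>{m. (\<forall>j<s. m j \<le> nu j) \<and> (\<forall>j\<ge>s. m j = 0)}.
              (\<Prod>j<s. \<beta> j ^ m j) * Gamma A R l (\<Sum>j<s. m j)
              * (\<Prod>j<s. real (Stirling (nu j) (m j))))"
proof (intro allI impI)
  fix l p :: nat and nu :: "nat \<Rightarrow> nat" and y :: "nat \<Rightarrow> real"
  assume H: "1 \<le> l \<and> l \<le> L \<and> p < d (l + 1) \<and> (\<forall>j\<ge>s. nu j = 0) \<and> nu \<noteq> (\<lambda>_. 0)"
  define js where "js = rev (lst s nu)"
  define F where "F = (\<lambda>x. net d W v \<sigma> x l p)"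
  have cntjs: "cnt js = nu"
    using H by (auto simp: cnt_def js_def count_lst fun_eq_iff)
  have setjs: "set js \<subseteq> {..<s}" using set_lst by (simp add: js_def)
  have cntk: "count_list js k = nu k" for k using cntjs by (simp add: cnt_def fun_eq_iff)
  have jsne: "js \<noteq> []"
  proof
    assume "js = []"
    then have "nu k = 0" for k using cntk[of k] by simp
    then show False using H by auto
  qed
  have len: "length js = (\<Sum>j<s. nu j)"
    using sum_count_set[OF setjs] by (simp add: cntk)
  have bpjs: "bp \<beta> js = (\<Prod>j<s. \<beta> j ^ nu j)"
    using bp_count[OF setjs] by (simp add: cntk)
  have Fb: "\<bar>dl ks F x\<bar> \<le> bp \<beta> ks * (R l * Gamma A R l (length ks))"
    if "set ks \<subseteq> {..<s}" "ks \<noteq> []" for ks x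
    unfolding F_def
    by (rule layers_bound[OF d0 smooth \<beta>pos Rpos Apos W0 Wl \<sigma>bd]) (use H that in auto)
  have sF: "smooth F" unfolding F_def by (rule net_smooth[OF smooth])
  have partA: "\<bar>mpartial s nu (\<lambda>y. netNP d W v \<sigma> l y p) y\<bar> \<le> R l * (\<Prod>j<s. \<beta> j ^ nu j) * Gamma A R l (\<Sum>j<s. nu j)"
  proof -
    have e: "(\<lambda>y. netNP d W v \<sigma> l y p) = F" by (simp add: netNP_def F_def)
    have "\<bar>mpartial s nu (\<lambda>y. netNP d W v \<sigma> l y p) y\<bar> = \<bar>dl js F y\<bar>"
      unfolding e mpartial_dl js_def ..
    also have "\<dots> \<le> bp \<beta> js * (R l * Gamma A R l (length js))" by (rule Fb[OF setjs jsne])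
    finally show ?thesis by (simp add: bpjs len algebra_simps)
  qed
  obtain j js' where jj: "js = j # js'" using jsne by (cases js) auto
  have j: "j < s" and setjs': "set js' \<subseteq> {..<s}" using setjs jj by auto
  define M where "M m = R l * (\<Prod>k<s. \<beta> k ^ m k) * Gamma A R l (\<Sum>k<s. m k)" for m :: "nat \<Rightarrow> nat"
  have MF: "\<bar>dl ks F x\<bar> \<le> M (cnt ks)" if "set ks \<subseteq> {..<s}" "ks \<noteq> []" for ks x
  proof -
    have "bp \<beta> ks * (R l * Gamma A R l (length ks)) = M (cnt ks)"
      unfolding M_def cnt_def bp_count[OF that(1)] sum_count_set[OF that(1) finite_lessThan] by simp
    then show ?thesis using Fb[OF that] by simp
  qed
  have hb1: "\<forall>ks x. set ks \<subseteq> {..<s} \<longrightarrow> \<bar>dl ks (dpart j F) x\<bar> \<le> M ((cnt ks)(j := Suc (cnt ks j)))"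
  proof (intro allI impI)
    fix ks x assume "set ks \<subseteq> {..<s}"
    then have "set (j # ks) \<subseteq> {..<s}" using j by simp
    from MF[OF this, of x] show "\<bar>dl ks (dpart j F) x\<bar> \<le> M ((cnt ks)(j := Suc (cnt ks j)))"
      unfolding cnt_Cons by simp
  qed
  have dPsi: "dpart j (\<lambda>y. F (Psi y)) = P (dpart j F) [(j, 1)]"
  proof
    fix y
    show "dpart j (\<lambda>y. F (Psi y)) y = P (dpart j F) [(j, 1)] y"
      using dpart_HPsi(2)[OF smooth_pd[OF sF]] by (simp add: P_def C_Cons)
  qed
  have eP: "(\<lambda>y. netP d W v \<sigma> l y p) = (\<lambda>y. F (Psi y))"
    by (simp add: netP_def Psi_def F_def)
  have B: "\<bar>dl js' (P (dpart j F) [(j, 1)]) y\<bar> \<le> (2 * pi) ^ (sumA [(j, 1)] + length js') *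
      (\<Sum>m\<in>Box s (cnt js'). M (m(j := Suc (m j))) * (\<Prod>k<s. N (cnt js' k) (m k) (bc [(j, 1)] k)))"
    by (rule P_bound[where M = "\<lambda>m. M (m(j := Suc (m j)))", OF setjs' smooth_dpart[OF sF] hb1])
  have bc1: "bc [(j, 1)] = (\<lambda>_. 0)(j := Suc ((\<lambda>_. 0) j))" by (simp add: bc_def fun_eq_iff)
  have cnt': "(cnt js')(j := Suc (cnt js' j)) = nu" using cntjs jj cnt_Cons by simp
  have BI: "(\<Sum>m\<in>Box s nu. M m * (\<Prod>k<s. N (nu k) (m k) 0)) =
      (\<Sum>m\<in>Box s (cnt js'). M (m(j := Suc (m j))) * (\<Prod>k<s. N (cnt js' k) (m k) (bc [(j, 1)] k)))"
    using box_identity[OF j, of M "cnt js'" "\<lambda>_. 0"] unfolding cnt' bc1 by simp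
  have ex: "sumA [(j, 1)] + length js' = (\<Sum>j<s. nu j)" using len jj by (simp add: sumA_def)
  have "\<bar>mpartial s nu (\<lambda>y. netP d W v \<sigma> l y p) y\<bar> = \<bar>dl js' (P (dpart j F) [(j, 1)]) y\<bar>"
    unfolding eP mpartial_dl js_def[symmetric] jj by (simp add: dPsi)
  also have "\<dots> \<le> (2 * pi) ^ (\<Sum>j<s. nu j) * (\<Sum>m\<in>Box s nu. M m * (\<Prod>k<s. N (nu k) (m k) 0))"
    using B unfolding ex BI .
  also have "\<dots> = R l * (2 * pi) ^ (\<Sum>j<s. nu j) *
           (\<Sum>m\<in>{m. (\<forall>j<s. m j \<le> nu j) \<and> (\<forall>j\<ge>s. m j = 0)}.
              (\<Prod>j<s. \<beta> j ^ m j) * Gamma A R l (\<Sum>j<s. m j)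
              * (\<Prod>j<s. real (Stirling (nu j) (m j))))"
    unfolding Box_def M_def N_Stirling by (simp add: sum_distrib_left algebra_simps)
  finally show "\<bar>mpartial s nu (\<lambda>y. netNP d W v \<sigma> l y p) y\<bar>
        \<le> R l * (\<Prod>j<s. \<beta> j ^ nu j) * Gamma A R l (\<Sum>j<s. nu j)
   \<and> \<bar>mpartial s nu (\<lambda>y. netP d W v \<sigma> l y p) y\<bar>
        \<le> R l * (2 * pi) ^ (\<Sum>j<s. nu j) *
           (\<Sum>m\<in>{m. (\<forall>j<s. m j \<le> nu j) \<and> (\<forall>j\<ge>s. m j = 0)}.
              (\<Prod>j<s. \<beta> j ^ m j) * Gamma A R l (\<Sum>j<s. m j)
              * (\<Prod>j<s. real (Stirling (nu j) (m j))))"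
    using partA by simp
qed


end
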